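(* Let $\theta\in C^\infty(\mathbb{R})$ be defined by $\theta(x)=0$ for $x\le 0$ and $\theta(x)=e^{-1/x}$ for $x>0$. Let $D\subseteq \mathbb{C}^n$ be open, let $v$ be a pluriharmonic function on $D$, and let $d$ be a strictly plurisubharmonic function of class $C^2$ on $D$. Then for every open set $E$ with compact closure $\overline{E}\subset D$ there exists $\epsilon_0>0$ such that the function $e^{v}\theta(d)$ is plurisubharmonic on $E\cap \{d< \epsilon_0\}$. *)

theory Defs
  imports "HOL-Analysis.Analysis"
begin

definition theta :: "real \<Rightarrow> real" where
  "theta x = (if x \<le> 0 then 0 else exp (- 1 / x))"

definition usc_on :: "'a::topological_space set \<Rightarrow> ('a \<Rightarrow> real) \<Rightarrow> bool" where
  "usc_on S u \<longleftrightarrow> (\<forall>x\<in>S. \<forall>c. u x < c \<longrightarrow> (\<forall>\<^sub>F y in at x within S. u y < c))"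

text \<open>Plurisubharmonic (real-valued) function on a set of C^n: upper semicontinuous
  and satisfying the sub-mean value inequality on every closed complex disc
  {a + zeta b : |zeta| <= 1} contained in the set.  (For a real-valued function the
  mean value is finite exactly when the circle average is integrable.)\<close>
definition psh :: "(complex ^ 'n) set \<Rightarrow> (complex ^ 'n \<Rightarrow> real) \<Rightarrow> bool" where
  "psh D u \<longleftrightarrow> usc_on D u \<and>
     (\<forall>a b. (\<forall>\<zeta>::complex. norm \<zeta> \<le> 1 \<longrightarrow> a + \<zeta> *s b \<in> D) \<longrightarrow>
        (\<lambda>t. u (a + cis t *s b)) integrable_on {0..2*pi} \<and>
        u a \<le> integral {0..2*pi} (\<lambda>t. u (a + cis t *s b)) / (2*pi))"

definition C2_with :: "(complex ^ 'n) set \<Rightarrow> (complex ^ 'n \<Rightarrow> real)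
    \<Rightarrow> (complex ^ 'n \<Rightarrow> ((complex ^ 'n) \<Rightarrow>\<^sub>L real))
    \<Rightarrow> (complex ^ 'n \<Rightarrow> ((complex ^ 'n) \<Rightarrow>\<^sub>L ((complex ^ 'n) \<Rightarrow>\<^sub>L real))) \<Rightarrow> bool" where
  "C2_with D f f' f'' \<longleftrightarrow>
     (\<forall>x\<in>D. (f has_derivative blinfun_apply (f' x)) (at x)) \<and>
     (\<forall>x\<in>D. (f' has_derivative blinfun_apply (f'' x)) (at x)) \<and>
     continuous_on D f''"

text \<open>Levi form of f at x in direction b, computed from the real Hessian f'' x:
  L(x;b) = sum_{j,k} f_{z_j zbar_k} b_j conj(b_k) = (D^2 f(b,b) + D^2 f(ib,ib)) / 4.\<close>
definition levi :: "((complex ^ 'n) \<Rightarrow>\<^sub>L ((complex ^ 'n) \<Rightarrow>\<^sub>L real)) \<Rightarrow> complex ^ 'n \<Rightarrow> real" where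
  "levi H b = (blinfun_apply (blinfun_apply H b) b
               + blinfun_apply (blinfun_apply H (\<i> *s b)) (\<i> *s b)) / 4"

definition pluriharmonic :: "(complex ^ 'n) set \<Rightarrow> (complex ^ 'n \<Rightarrow> real) \<Rightarrow> bool" where
  "pluriharmonic D v \<longleftrightarrow>
     (\<exists>f' f''. C2_with D v f' f'' \<and> (\<forall>x\<in>D. \<forall>b. levi (f'' x) b = 0))"

definition strictly_psh_C2 :: "(complex ^ 'n) set \<Rightarrow> (complex ^ 'n \<Rightarrow> real) \<Rightarrow> bool" where
  "strictly_psh_C2 D d \<longleftrightarrow>
     (\<exists>f' f''. C2_with D d f' f'' \<and> (\<forall>x\<in>D. \<forall>b. b \<noteq> 0 \<longrightarrow> levi (f'' x) b > 0))"

end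

theory Submission imports Defs "HOL-Real_Asymp.Real_Asymp" begin

lemma pw_deriv:
  fixes g g' :: "real \<Rightarrow> real"
  assumes d: "\<And>s. s > 0 \<Longrightarrow> (g has_real_derivative g' s) (at s)"
    and l: "((\<lambda>s. g s / s) \<longlongrightarrow> 0) (at_right 0)"
  shows "((\<lambda>s. if s \<le> 0 then 0 else g s) has_real_derivative (if s \<le> 0 then 0 else g' s)) (at s)"
proof (cases "s = 0")
  case True
  have "((\<lambda>y. ((if y \<le> 0 then 0 else g y) - (if (0::real) \<le> 0 then 0 else g 0)) / (y - 0)) \<longlongrightarrow> 0) (at 0)"
  proof (rule filterlim_split_at)
    show "((\<lambda>y. ((if y \<le> 0 then 0 else g y) - (if (0::real) \<le> 0 then 0 else g 0)) / (y - 0)) \<longlongrightarrow> 0) (at_left 0)"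
      by (rule Lim_transform_eventually[OF tendsto_const]) (auto simp: eventually_at_left_field intro: exI[of _ "-1::real"])
    show "((\<lambda>y. ((if y \<le> 0 then 0 else g y) - (if (0::real) \<le> 0 then 0 else g 0)) / (y - 0)) \<longlongrightarrow> 0) (at_right 0)"
      by (rule Lim_transform_eventually[OF l]) (auto simp: eventually_at_right_field intro: exI[of _ "1::real"])
  qed
  then show ?thesis using True by (simp add: has_field_derivative_iff)
next
  case False
  show ?thesis
  proof (cases "s < 0")
    case True
    have "((\<lambda>s. if s \<le> 0 then 0 else g s) has_real_derivative 0) (at s)"
      by (rule has_field_derivative_transform_within_open[OF DERIV_const, where S="{..<0}"]) (use True in auto)
    then show ?thesis using True by simp
  next
    case F: False
    with False have "s > 0" by auto
    have "((\<lambda>s. if s \<le> 0 then 0 else g s) has_real_derivative g' s) (at s)"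
      by (rule has_field_derivative_transform_within_open[OF d[of s], where S="{0<..}"]) (use \<open>s>0\<close> in auto)
    then show ?thesis using \<open>s>0\<close> by simp
  qed
qed

lemma pw_cont:
  fixes g :: "real \<Rightarrow> real"
  assumes d: "\<And>s. s > 0 \<Longrightarrow> isCont g s"
    and l: "(g \<longlongrightarrow> 0) (at_right 0)"
  shows "isCont (\<lambda>s. if s \<le> 0 then 0 else g s) s"
proof (cases "s = 0")
  case True
  have "((\<lambda>y. if y \<le> 0 then 0 else g y) \<longlongrightarrow> 0) (at 0)"
  proof (rule filterlim_split_at)
    show "((\<lambda>y. if y \<le> 0 then 0 else g y) \<longlongrightarrow> 0) (at_left 0)"
      by (rule Lim_transform_eventually[OF tendsto_const]) (auto simp: eventually_at_left_field intro: exI[of _ "-1::real"])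
    show "((\<lambda>y. if y \<le> 0 then 0 else g y) \<longlongrightarrow> 0) (at_right 0)"
      by (rule Lim_transform_eventually[OF l]) (auto simp: eventually_at_right_field intro: exI[of _ "1::real"])
  qed
  then show ?thesis using True by (simp add: isCont_def)
next
  case False
  show ?thesis
  proof (cases "s < 0")
    case True
    have "\<forall>\<^sub>F y in nhds s. 0 = (if y \<le> 0 then 0 else g y)"
      using eventually_nhds_in_open[of "{..<0}" s] True by (auto elim!: eventually_mono)
    then have "\<forall>\<^sub>F y in at s. 0 = (if y \<le> 0 then 0 else g y)"
      unfolding eventually_at_filter by (rule eventually_mono) auto
    then have "((\<lambda>y. if y \<le> 0 then 0 else g y) \<longlongrightarrow> 0) (at s)"
      by (rule Lim_transform_eventually[OF tendsto_const])
    then show ?thesis using True unfolding isCont_def by simp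
  next
    case F: False
    with False have s: "s > 0" by auto
    have "\<forall>\<^sub>F y in nhds s. g y = (if y \<le> 0 then 0 else g y)"
      using eventually_nhds_in_open[of "{0<..}" s] s by (auto elim!: eventually_mono)
    then have "\<forall>\<^sub>F y in at s. g y = (if y \<le> 0 then 0 else g y)"
      unfolding eventually_at_filter by (rule eventually_mono) auto
    then have "((\<lambda>y. if y \<le> 0 then 0 else g y) \<longlongrightarrow> g s) (at s)"
      by (rule Lim_transform_eventually[OF d[OF s, unfolded isCont_def]])
    then show ?thesis using s unfolding isCont_def by simp
  qed
qed

definition theta1 :: "real \<Rightarrow> real" where
  "theta1 s = (if s \<le> 0 then 0 else exp (- 1 / s) / s^2)"
definition theta2 :: "real \<Rightarrow> real" where
  "theta2 s = (if s \<le> 0 then 0 else exp (- 1 / s) * (1 / s^4 - 2 / s^3))"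

lemma exp_inv_deriv: "s > 0 \<Longrightarrow> ((\<lambda>s::real. exp (- 1 / s)) has_real_derivative exp (- 1 / s) / s\<^sup>2) (at s)"
  by (auto intro!: derivative_eq_intros simp: field_simps power2_eq_square)

lemma theta_deriv: "(theta has_real_derivative theta1 s) (at s)"
  unfolding theta_def theta1_def
proof (rule pw_deriv)
  fix s :: real assume "s > 0"
  then show "((\<lambda>s. exp (- 1 / s)) has_real_derivative exp (- 1 / s) / s\<^sup>2) (at s)"
    by (rule exp_inv_deriv)
qed real_asymp

lemma theta1_deriv: "(theta1 has_real_derivative theta2 s) (at s)"
  unfolding theta2_def theta1_def
proof (rule pw_deriv)
  fix s :: real assume "s > 0"
  show "((\<lambda>s. exp (- 1 / s) / s\<^sup>2) has_real_derivative exp (- 1 / s) * (1 / s^4 - 2 / s^3)) (at s)"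
    apply (rule DERIV_cong[OF DERIV_divide[OF exp_inv_deriv DERIV_pow[of 2]]])
    using \<open>s > 0\<close> apply simp_all
    apply (simp add: field_simps eval_nat_numeral)
    done
qed real_asymp

lemma theta2_cont: "isCont theta2 s"
  unfolding theta2_def
proof (rule pw_cont)
  fix s :: real assume "s > 0"
  show "isCont (\<lambda>s. exp (- 1 / s) * (1 / s ^ 4 - 2 / s ^ 3)) s"
    using \<open>s > 0\<close> by (intro continuous_intros) auto
qed real_asymp

lemma smult_ofreal: "(complex_of_real r * z) *s (b::complex^'n) = r *\<^sub>R (z *s b)"
  by (vector scaleR_conv_of_real)
lemma bl_smult[bounded_linear]: "bounded_linear (\<lambda>z::complex. z *s (b::complex^'n))"
  apply (rule linear_conv_bounded_linear[THEN iffD1])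
  apply (rule linearI) by (vector algebra_simps scaleR_conv_of_real)+

lemma submean:
  fixes S :: "(complex^'n) set" and u :: "complex^'n \<Rightarrow> real"
  assumes S: "open S" and C2: "C2_with S u u' u''" and L: "\<And>x b. x \<in> S \<Longrightarrow> levi (u'' x) b \<ge> 0"
    and disc: "\<And>\<zeta>::complex. norm \<zeta> \<le> 1 \<Longrightarrow> a + \<zeta> *s b \<in> S"
  shows "(\<lambda>t. u (a + cis t *s b)) integrable_on {0..2*pi} \<and>
         u a \<le> integral {0..2*pi} (\<lambda>t. u (a + cis t *s b)) / (2*pi)"
proof -
  from C2 have d1: "\<And>x. x\<in>S \<Longrightarrow> (u has_derivative blinfun_apply (u' x)) (at x)"
    and d2: "\<And>x. x\<in>S \<Longrightarrow> (u' has_derivative blinfun_apply (u'' x)) (at x)"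
    and c2: "continuous_on S u''" unfolding C2_with_def by auto
  have cu: "continuous_on S u" using d1
    by (meson has_derivative_continuous continuous_at_imp_continuous_on)
  have cu': "continuous_on S u'" using d2
    by (meson has_derivative_continuous continuous_at_imp_continuous_on)
  define c where "c t = cis t *s b" for t
  define ci where "ci t = (\<i> * cis t) *s b" for t
  define p where "p r t = a + r *\<^sub>R c t" for r t
  have pS: "r \<in> {0..1} \<Longrightarrow> p r t \<in> S" for r t
    using disc[of "complex_of_real r * cis t"] by (simp add: p_def c_def smult_ofreal norm_mult)
  have pS2: "(\<lambda>(r,t). p r t) ` ({0..1} \<times> {0..2*pi}) \<subseteq> S" using pS by auto
  have pc: "continuous_on X (\<lambda>(r,t). p r t)" for X
    unfolding p_def c_def by (auto simp: split_beta intro!: continuous_intros)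
  have cc: "continuous_on X (\<lambda>(r::real,t). c t)" "continuous_on X (\<lambda>(r::real,t). ci t)" for X
    unfolding ci_def c_def by (auto simp: split_beta intro!: continuous_intros)
  have ch: "continuous_on ({0..1} \<times> {0..2*pi}) (\<lambda>(r,t). u (p r t))"
    using continuous_on_compose2[OF cu pc pS2] by (simp add: split_beta)
  have cu'p: "continuous_on ({0..1} \<times> {0..2*pi}) (\<lambda>(r,t). u' (p r t))"
    using continuous_on_compose2[OF cu' pc pS2] by (simp add: split_beta)
  have cu''p: "continuous_on ({0..1} \<times> {0..2*pi}) (\<lambda>(r,t). u'' (p r t))"
    using continuous_on_compose2[OF c2 pc pS2] by (simp add: split_beta)
  have ch1: "continuous_on ({0..1} \<times> {0..2*pi}) (\<lambda>(r,t). u' (p r t) (c t))"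
    using blinfun.continuous_on[OF cu'p cc(1)] by (simp add: split_beta)
  have ch2: "continuous_on ({0..1} \<times> {0..2*pi}) (\<lambda>(r,t). u'' (p r t) (c t) (c t))"
    using blinfun.continuous_on[OF blinfun.continuous_on[OF cu''p cc(1)] cc(1)] by (simp add: split_beta)
  have chq: "continuous_on ({0..1} \<times> {0..2*pi}) (\<lambda>(r,t). u'' (p r t) (ci t) (ci t))"
    using blinfun.continuous_on[OF blinfun.continuous_on[OF cu''p cc(2)] cc(2)] by (simp add: split_beta)
  have pr: "((\<lambda>r. p r t) has_derivative (\<lambda>h. h *\<^sub>R c t)) (at r)" for r t
    unfolding p_def by (auto intro!: derivative_eq_intros)
  have hr: "((\<lambda>r. u (p r t)) has_field_derivative u' (p r t) (c t)) (at r)" if "r \<in> {0..1}" for r t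
  proof -
    have "((\<lambda>r. u (p r t)) has_derivative (\<lambda>h. u' (p r t) (h *\<^sub>R c t))) (at r)"
      using has_derivative_compose[OF pr d1[OF pS[OF that]]] .
    then show ?thesis unfolding has_field_derivative_def
      by (rule has_derivative_eq_rhs) (simp add: fun_eq_iff blinfun.scaleR_right)
  qed
  have hrr: "((\<lambda>r. u' (p r t) (c t)) has_field_derivative u'' (p r t) (c t) (c t)) (at r)" if "r \<in> {0..1}" for r t
  proof -
    have "((\<lambda>r. u' (p r t)) has_derivative (\<lambda>h. u'' (p r t) (h *\<^sub>R c t))) (at r)"
      using has_derivative_compose[OF pr d2[OF pS[OF that]]] .
    from blinfun.FDERIV[OF this has_derivative_const]
    show ?thesis unfolding has_field_derivative_def
      by (rule has_derivative_eq_rhs) (simp add: fun_eq_iff blinfun.scaleR_right blinfun.scaleR_left)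
  qed
  have cdt: "((\<lambda>t. c t) has_derivative (\<lambda>h. h *\<^sub>R ci t)) (at t)" for t
    using bounded_linear.has_derivative[OF bl_smult[of b], OF has_derivative_cis[OF has_derivative_ident]] unfolding c_def ci_def
    by (rule has_derivative_eq_rhs) (auto simp: fun_eq_iff vec_eq_iff)
  have cit: "((\<lambda>t. ci t) has_derivative (\<lambda>h. h *\<^sub>R (- c t))) (at t)" for t
    using bounded_linear.has_derivative[OF bl_smult[of b], OF has_derivative_mult_right[OF has_derivative_cis[OF has_derivative_ident], of \<i>]] unfolding c_def ci_def
    by (rule has_derivative_eq_rhs) (auto simp: fun_eq_iff vec_eq_iff)
  have pt: "((\<lambda>t. p r t) has_derivative (\<lambda>h. h *\<^sub>R (r *\<^sub>R ci t))) (at t)" for r t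
    unfolding p_def using has_derivative_add[OF has_derivative_const has_derivative_scaleR_right[OF cdt]]
    by (rule has_derivative_eq_rhs) (auto simp: fun_eq_iff)
  have gt: "((\<lambda>t. u' (p r t) (ci t)) has_field_derivative
      (r * u'' (p r t) (ci t) (ci t) - u' (p r t) (c t))) (at t)" if "r \<in> {0..1}" for r t
  proof -
    have "((\<lambda>t. u' (p r t)) has_derivative (\<lambda>h. u'' (p r t) (h *\<^sub>R (r *\<^sub>R ci t)))) (at t)"
      using has_derivative_compose[OF pt d2[OF pS[OF that]]] .
    from blinfun.FDERIV[OF this cit]
    show ?thesis unfolding has_field_derivative_def
      by (rule has_derivative_eq_rhs) (simp add: fun_eq_iff blinfun.scaleR_right blinfun.scaleR_left blinfun.minus_right algebra_simps)
  qed
  have slice: "(\<lambda>t. f r t) integrable_on {0..2*pi}"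
    if "continuous_on ({0..1} \<times> {0..2*pi}) (\<lambda>(r,t). f r t)" "r \<in> {0..1}" for f :: "real \<Rightarrow> real \<Rightarrow> real" and r
  proof -
    have "continuous_on {0..2*pi} (\<lambda>t. f r t)"
      by (rule continuous_on_compose2[OF that(1), of "{0..2*pi}" "\<lambda>t. (r,t)", simplified])
        (use that(2) in \<open>auto intro!: continuous_intros\<close>)
    then show ?thesis by (rule integrable_continuous_interval)
  qed
  define M where "M r = integral {0..2*pi} (\<lambda>t. u (p r t))" for r
  define M1 where "M1 r = integral {0..2*pi} (\<lambda>t. u' (p r t) (c t))" for r
  define M2 where "M2 r = integral {0..2*pi} (\<lambda>t. u'' (p r t) (c t) (c t))" for r
  define Q where "Q r = integral {0..2*pi} (\<lambda>t. u'' (p r t) (ci t) (ci t))" for r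
  have MD: "(M has_field_derivative M1 r) (at r within {0..1})" if "r \<in> {0..1}" for r
    unfolding M_def M1_def
    apply (rule leibniz_rule_field_derivative[where fx="\<lambda>r t. u' (p r t) (c t)", of "{0..1}" 0 "2*pi", unfolded cbox_interval])
    using hr ch ch1 slice that by (auto intro: has_field_derivative_at_within)
  have M1D: "(M1 has_field_derivative M2 r) (at r within {0..1})" if "r \<in> {0..1}" for r
    unfolding M2_def M1_def
    apply (rule leibniz_rule_field_derivative[where fx="\<lambda>r t. u'' (p r t) (c t) (c t)", of "{0..1}" 0 "2*pi", unfolded cbox_interval])
    using hrr ch1 ch2 slice that by (auto intro: has_field_derivative_at_within)
  have key: "r * Q r = M1 r" if "r \<in> {0..1}" for r
  proof -
    have "((\<lambda>t. r * u'' (p r t) (ci t) (ci t) - u' (p r t) (c t)) has_integral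
        (u' (p r (2*pi)) (ci (2*pi)) - u' (p r 0) (ci 0))) {0..2*pi}"
      by (rule fundamental_theorem_of_calculus)
        (auto intro!: has_field_derivative_at_within gt[OF that] simp: has_real_derivative_iff_has_vector_derivative[symmetric])
    moreover have "u' (p r (2*pi)) (ci (2*pi)) - u' (p r 0) (ci 0) = 0"
      by (simp add: p_def c_def ci_def)
    ultimately have "integral {0..2*pi} (\<lambda>t. r * u'' (p r t) (ci t) (ci t) - u' (p r t) (c t)) = 0"
      by (simp add: integral_unique)
    moreover have "integral {0..2*pi} (\<lambda>t. r * u'' (p r t) (ci t) (ci t) - u' (p r t) (c t)) = r * Q r - M1 r"
      unfolding Q_def M1_def
      using integrable_on_cmult_left[OF slice[OF chq that], of r] slice[OF ch1 that] by (subst integral_diff) auto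
    ultimately show ?thesis by simp
  qed
  have QM2: "0 \<le> M2 r + Q r" if that: "r \<in> {0..1}" for r
  proof -
    have "M2 r + Q r = integral {0..2*pi} (\<lambda>t. u'' (p r t) (c t) (c t) + u'' (p r t) (ci t) (ci t))"
      unfolding M2_def Q_def by (subst integral_add) (auto intro!: slice[OF chq that] slice[OF ch2 that])
    also have "\<dots> \<ge> 0"
    proof (rule integral_nonneg)
      fix t
      have "ci t = \<i> *s c t" by (simp add: ci_def c_def vector_smult_assoc)
      then show "0 \<le> u'' (p r t) (c t) (c t) + u'' (p r t) (ci t) (ci t)"
        using L[OF pS[OF that, of t], where b="c t"] by (simp add: levi_def)
    qed (auto intro!: integrable_add slice[OF chq that] slice[OF ch2 that])
    finally show ?thesis .
  qed
  have contw: "continuous_on {0..1} f" if "\<And>r. r \<in> {0..1} \<Longrightarrow> (f has_field_derivative f' r) (at r within {0..1})" for f f' :: "real \<Rightarrow> real"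
    unfolding continuous_on_eq_continuous_within using that DERIV_continuous by blast
  have atr: "at r within {0..1} = at r" if "0 < r" "r < 1" for r :: real
    using that by (rule at_within_Icc_at)
  define N where "N r = r * M1 r" for r
  have ND: "(N has_field_derivative (M1 r + r * M2 r)) (at r within {0..1})" if "r \<in> {0..1}" for r
    unfolding N_def using DERIV_mult[OF DERIV_ident M1D[OF that]] by (simp add: algebra_simps)
  have M1nn: "M1 r \<ge> 0" if "0 < r" "r \<le> 1" for r
  proof -
    have "N 0 \<le> N r"
    proof (rule DERIV_nonneg_imp_increasing_open[of 0 r N])
      fix x assume x: "0 < x" "x < r"
      have "M1 x + x * M2 x = x * (M2 x + Q x)" using key[of x] x that by (simp add: algebra_simps)
      also have "\<dots> \<ge> 0" using QM2[of x] x that by simp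
      finally show "\<exists>y. (N has_real_derivative y) (at x) \<and> 0 \<le> y"
        using ND[of x] x that atr[of x] by auto
    next
      show "continuous_on {0..r} N"
        by (rule continuous_on_subset[OF contw[OF ND]]) (use that in auto)
    qed (use that in auto)
    then show ?thesis using that by (simp add: N_def zero_le_mult_iff)
  qed
  have "M 0 \<le> M 1"
  proof (rule DERIV_nonneg_imp_increasing_open[of 0 1 M])
    fix x assume x: "(0::real) < x" "x < 1"
    show "\<exists>y. (M has_real_derivative y) (at x) \<and> 0 \<le> y"
      using MD[of x] M1nn[of x] x atr[of x] by auto
  qed (use contw[OF MD] in auto)
  moreover have "M 0 = 2 * pi * u a" by (simp add: M_def p_def)
  moreover have "M 1 = integral {0..2*pi} (\<lambda>t. u (a + cis t *s b))" by (simp add: M_def p_def c_def)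
  moreover have "(\<lambda>t. u (a + cis t *s b)) integrable_on {0..2*pi}"
    using slice[OF ch, of 1] by (simp add: p_def c_def)
  ultimately show ?thesis by (simp add: field_simps)
qed
lemma key_ineq:
  fixes s a l C L A1 A2 B1 B2 :: real
  assumes s: "0 < s" "s \<le> 1/4" and sa: "s^2 * a^2 \<le> l" and A: "A1^2 + A2^2 \<le> 2*a^2*C"
    and L: "l*C \<le> L" and C: "0 \<le> C"
  shows "0 \<le> (1/s^4 - 2/s^3)*(B1^2+B2^2) + 4*L/s^2 + 2*(A1*B1 + A2*B2)/s^2 + (A1^2+A2^2)"
proof -
  define X where "X = (1 - 2* s)*(B1^2+B2^2) + 4*L* s^2 + 2* s^2*(A1*B1 + A2*B2) + s^4*(A1^2+A2^2)"
  have eq: "(1/s^4 - 2/s^3)*(B1^2+B2^2) + 4*L/s^2 + 2*(A1*B1 + A2*B2)/s^2 + (A1^2+A2^2) = X / s^4"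
    using s unfolding X_def by (simp add: field_simps eval_nat_numeral)
  have h1: "0 \<le> B1^2/2 + 2* s^2*A1*B1 + 2* s^4*A1^2"
  proof -
    have "B1^2/2 + 2* s^2*A1*B1 + 2* s^4*A1^2 = (B1 + 2* s^2*A1)^2/2" by (simp add: power2_eq_square algebra_simps eval_nat_numeral)
    then show ?thesis by (metis divide_nonneg_nonneg zero_le_numeral zero_le_power2)
  qed
  have h2: "0 \<le> B2^2/2 + 2* s^2*A2*B2 + 2* s^4*A2^2"
  proof -
    have "B2^2/2 + 2* s^2*A2*B2 + 2* s^4*A2^2 = (B2 + 2* s^2*A2)^2/2" by (simp add: power2_eq_square algebra_simps eval_nat_numeral)
    then show ?thesis by (metis divide_nonneg_nonneg zero_le_numeral zero_le_power2)
  qed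
  have l0: "0 \<le> l" using sa by (metis order_trans zero_le_mult_iff zero_le_power2)
  have a1: "s^4*(A1^2+A2^2) \<le> s^4*(2*a^2*C)" using A by (intro mult_left_mono) auto
  have a2: "(s^2*a^2)*(s^2*C) \<le> l*(s^2*C)" using sa C by (intro mult_right_mono) auto
  have a3: "l*C* s^2 \<le> L* s^2" using L by (intro mult_right_mono) auto
  have a4: "0 \<le> (1/2 - 2* s)*(B1^2+B2^2)" using s by (intro mult_nonneg_nonneg) auto
  have a5: "0 \<le> l*C* s^2" using l0 C by simp
  have "s^4*(2*a^2*C) = 2*((s^2*a^2)*(s^2*C))" by (simp add: algebra_simps eval_nat_numeral)
  then have "0 \<le> X" using h1 h2 a1 a2 a3 a4 a5 unfolding X_def by (simp add: algebra_simps)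
  then show ?thesis unfolding eq using s by simp
qed

lemma bl_cmult[bounded_linear]: "bounded_linear (\<lambda>b::complex^'n. c *s b)"
  apply (rule linear_conv_bounded_linear[THEN iffD1])
  apply (rule linearI) by (vector algebra_simps scaleR_conv_of_real)+

lemma norm_i_smult: "norm (\<i> *s (b::complex^'n)) = norm b"
  by (simp add: norm_vec_def norm_mult)

lemma ismult_scaleR: "\<i> *s (r *\<^sub>R (b::complex^'n)) = r *\<^sub>R (\<i> *s b)"
  by (vector scaleR_conv_of_real)

lemma levi_scale: "levi H (r *\<^sub>R b) = r^2 * levi H b"
  by (simp add: levi_def ismult_scaleR blinfun.scaleR_left blinfun.scaleR_right power2_eq_square algebra_simps)

lemma comp_real:
  assumes "(g has_derivative g') (at x)" "(f has_real_derivative f1) (at (g x))"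
  shows "((\<lambda>y. f (g y)) has_derivative (\<lambda>h. f1 * g' h)) (at x)"
  using has_derivative_compose[OF assms(1) assms(2)[unfolded has_field_derivative_def]] by simp

definition outer :: "('a::real_normed_vector \<Rightarrow>\<^sub>L real) \<Rightarrow> 'b::real_normed_vector \<Rightarrow> 'a \<Rightarrow>\<^sub>L 'b" where
  "outer a w = blinfun_scaleR_left w o\<^sub>L a"

lemma outer_apply[simp]: "outer a w h = a h *\<^sub>R w"
  by (simp add: outer_def)

lemma continuous_on_outer[continuous_intros]:
  "continuous_on S f \<Longrightarrow> continuous_on S g \<Longrightarrow> continuous_on S (\<lambda>x. outer (f x) (g x))"
  unfolding outer_def by (intro continuous_intros)

theorem lemma3p2:
  fixes D E :: "(complex ^ 'n) set" and v d :: "complex ^ 'n \<Rightarrow> real"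
  assumes "open D"
    and "pluriharmonic D v"
    and "strictly_psh_C2 D d"
    and "open E" and "compact (closure E)" and "closure E \<subseteq> D"
  shows "\<exists>\<epsilon>0>0. psh (E \<inter> {z. d z < \<epsilon>0}) (\<lambda>z. exp (v z) * theta (d z))"
proof -
  note oD = assms(1) and oE = assms(4) and cE = assms(5) and ED = assms(6)
  obtain v' v'' where Cv: "C2_with D v v' v''" and Lv: "\<And>x b. x \<in> D \<Longrightarrow> levi (v'' x) b = 0"
    using assms(2) unfolding pluriharmonic_def by blast
  obtain d' d'' where Cd: "C2_with D d d' d''" and Ld: "\<And>x b. x \<in> D \<Longrightarrow> b \<noteq> 0 \<Longrightarrow> levi (d'' x) b > 0"
    using assms(3) unfolding strictly_psh_C2_def by blast
  from Cv have dv: "\<And>x. x \<in> D \<Longrightarrow> (v has_derivative blinfun_apply (v' x)) (at x)"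
    and dv': "\<And>x. x \<in> D \<Longrightarrow> (v' has_derivative blinfun_apply (v'' x)) (at x)"
    and cv'': "continuous_on D v''" unfolding C2_with_def by auto
  from Cd have dd: "\<And>x. x \<in> D \<Longrightarrow> (d has_derivative blinfun_apply (d' x)) (at x)"
    and dd': "\<And>x. x \<in> D \<Longrightarrow> (d' has_derivative blinfun_apply (d'' x)) (at x)"
    and cd'': "continuous_on D d''" unfolding C2_with_def by auto
  have cv: "continuous_on D v" using dv by (meson has_derivative_continuous continuous_at_imp_continuous_on)
  have cv': "continuous_on D v'" using dv' by (meson has_derivative_continuous continuous_at_imp_continuous_on)
  have cd: "continuous_on D d" using dd by (meson has_derivative_continuous continuous_at_imp_continuous_on)
  have cd': "continuous_on D d'" using dd' by (meson has_derivative_continuous continuous_at_imp_continuous_on)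
  have ED': "E \<subseteq> D" using ED closure_subset by blast
  have "compact (v' ` closure E)"
    by (rule compact_continuous_image[OF continuous_on_subset[OF cv' ED] cE])
  then obtain al where al: "al > 0" "\<And>x. x \<in> closure E \<Longrightarrow> norm (v' x) \<le> al"
    using compact_imp_bounded bounded_pos by (metis image_eqI)
  obtain lam where lam: "lam > 0" "\<And>x b. x \<in> closure E \<Longrightarrow> b \<in> sphere 0 1 \<Longrightarrow> levi (d'' x) b \<ge> lam"
  proof (cases "closure E \<times> sphere (0::complex^'n) 1 = {}")
    case True
    then show ?thesis using that[of 1] by auto
  next
    case False
    have "continuous_on (closure E \<times> sphere 0 1) (\<lambda>(x,b). levi (d'' x) b)"
    proof -
      have c1: "continuous_on (closure E \<times> sphere 0 1) (\<lambda>p. d'' (fst p))"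
        by (rule continuous_on_compose2[OF cd'' continuous_on_fst]) (use ED in auto)
      show ?thesis unfolding levi_def split_beta
        by (intro continuous_intros c1) auto
    qed
    from continuous_attains_inf[OF compact_Times[OF cE compact_sphere] False this]
    obtain p where p: "p \<in> closure E \<times> sphere 0 1" "\<And>q. q \<in> closure E \<times> sphere 0 1 \<Longrightarrow> (\<lambda>(x,b). levi (d'' x) b) p \<le> (\<lambda>(x,b). levi (d'' x) b) q"
      by blast
    have "levi (d'' (fst p)) (snd p) > 0"
      using p(1) ED by (intro Ld) (auto simp: mem_Times_iff)
    then show ?thesis using p by (intro that[of "levi (d'' (fst p)) (snd p)"]) (auto simp: split_beta)
  qed
  have Lb: "levi (d'' x) b \<ge> lam * (norm b)^2" if "x \<in> closure E" for x b
  proof (cases "b = 0")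
    case True then show ?thesis by (simp add: levi_def)
  next
    case False
    have "levi (d'' x) b = levi (d'' x) (norm b *\<^sub>R (b /\<^sub>R norm b))" using False by simp
    also have "\<dots> = (norm b)^2 * levi (d'' x) (b /\<^sub>R norm b)" by (rule levi_scale)
    also have "\<dots> \<ge> (norm b)^2 * lam" using lam(2)[OF that, of "b /\<^sub>R norm b"] False
      by (intro mult_left_mono) auto
    finally show ?thesis by (simp add: mult.commute)
  qed
  define eps where "eps = min (1/4) (sqrt lam / al)"
  have eps: "eps > 0" using al lam by (simp add: eps_def)
  define S where "S = E \<inter> {z. d z < eps}"
  have oS: "open S"
  proof -
    have "open (E \<inter> d -` {..<eps})"
      by (rule continuous_open_preimage[OF continuous_on_subset[OF cd ED'] oE]) auto
    then show ?thesis by (simp add: S_def vimage_def Int_def)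
  qed
  have SD: "S \<subseteq> D" using ED' by (auto simp: S_def)
  define F where "F x = exp (v x)" for x
  define F1 where "F1 x = F x *\<^sub>R v' x" for x
  define F2 where "F2 x = outer (F1 x) (v' x) + F x *\<^sub>R v'' x" for x
  define T where "T x = theta (d x)" for x
  define T1 where "T1 x = theta1 (d x) *\<^sub>R d' x" for x
  define T2 where "T2 x = outer (theta2 (d x) *\<^sub>R d' x) (d' x) + theta1 (d x) *\<^sub>R d'' x" for x
  define U1 where "U1 x = F x *\<^sub>R T1 x + T x *\<^sub>R F1 x" for x
  define U2 where "U2 x = F x *\<^sub>R T2 x + outer (F1 x) (T1 x) + T x *\<^sub>R F2 x + outer (T1 x) (F1 x)" for x
  have dF: "(F has_derivative blinfun_apply (F1 x)) (at x)" if "x \<in> D" for x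
    using comp_real[OF dv[OF that] DERIV_exp] unfolding F_def F1_def
    by (rule has_derivative_eq_rhs) (simp add: fun_eq_iff blinfun.scaleR_left)
  have dT: "(T has_derivative blinfun_apply (T1 x)) (at x)" if "x \<in> D" for x
    using comp_real[OF dd[OF that] theta_deriv] unfolding T_def T1_def
    by (rule has_derivative_eq_rhs) (simp add: fun_eq_iff blinfun.scaleR_left)
  have dT1': "((\<lambda>x. theta1 (d x)) has_derivative blinfun_apply (theta2 (d x) *\<^sub>R d' x)) (at x)" if "x \<in> D" for x
    using comp_real[OF dd[OF that] theta1_deriv]
    by (rule has_derivative_eq_rhs) (simp add: fun_eq_iff blinfun.scaleR_left)
  have dF1: "(F1 has_derivative blinfun_apply (F2 x)) (at x)" if "x \<in> D" for x
    unfolding F1_def[abs_def]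
    by (rule has_derivative_eq_rhs[OF has_derivative_scaleR[OF dF[OF that] dv'[OF that]]])
      (auto intro!: ext blinfun_eqI simp: F2_def blinfun.scaleR_left blinfun.add_left algebra_simps)
  have dT1: "(T1 has_derivative blinfun_apply (T2 x)) (at x)" if "x \<in> D" for x
    unfolding T1_def[abs_def]
    by (rule has_derivative_eq_rhs[OF has_derivative_scaleR[OF dT1'[OF that] dd'[OF that]]])
      (auto intro!: ext blinfun_eqI simp: T2_def blinfun.scaleR_left blinfun.add_left algebra_simps)
  have du: "((\<lambda>z. exp (v z) * theta (d z)) has_derivative blinfun_apply (U1 x)) (at x)" if "x \<in> D" for x
  proof -
    have "((\<lambda>x. F x * T x) has_derivative blinfun_apply (U1 x)) (at x)"
      using has_derivative_mult[OF dF[OF that] dT[OF that]]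
      by (rule has_derivative_eq_rhs) (auto simp: U1_def blinfun.scaleR_left blinfun.add_left algebra_simps)
    then show ?thesis by (simp add: F_def T_def)
  qed
  have dU1: "(U1 has_derivative blinfun_apply (U2 x)) (at x)" if "x \<in> D" for x
    unfolding U1_def[abs_def]
    by (rule has_derivative_eq_rhs[OF has_derivative_add[OF has_derivative_scaleR[OF dF[OF that] dT1[OF that]]
          has_derivative_scaleR[OF dT[OF that] dF1[OF that]]]])
      (auto intro!: ext blinfun_eqI simp: U2_def blinfun.scaleR_left blinfun.add_left algebra_simps)
  have cU2: "continuous_on D U2"
  proof -
    have cF: "continuous_on D F" unfolding F_def by (intro continuous_intros cv)
    have cT: "continuous_on D T" unfolding T_def
      by (rule continuous_on_compose2[OF _ cd, of UNIV]) (auto intro: DERIV_isCont[OF theta_deriv] continuous_at_imp_continuous_on)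
    have cth1: "continuous_on D (\<lambda>x. theta1 (d x))"
      by (rule continuous_on_compose2[OF _ cd, of UNIV]) (auto intro: DERIV_isCont[OF theta1_deriv] continuous_at_imp_continuous_on)
    have cth2: "continuous_on D (\<lambda>x. theta2 (d x))"
      by (rule continuous_on_compose2[OF _ cd, of UNIV]) (auto intro: theta2_cont continuous_at_imp_continuous_on)
    show ?thesis unfolding U2_def F2_def T2_def F1_def T1_def
      by (intro continuous_intros cF cT cth1 cth2 cv' cd' cv'' cd'')
  qed
  have C2S: "C2_with S (\<lambda>z. exp (v z) * theta (d z)) U1 U2"
    unfolding C2_with_def using du dU1 continuous_on_subset[OF cU2 SD] SD by blast
  have LU: "levi (U2 x) b \<ge> 0" if x: "x \<in> S" for x b
  proof -
    have xD: "x \<in> D" and xE: "x \<in> closure E" and dx: "d x < eps" using x SD closure_subset by (auto simp: S_def)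
    define A1 where "A1 = v' x b"
    define A2 where "A2 = v' x (\<i> *s b)"
    define B1 where "B1 = d' x b"
    define B2 where "B2 = d' x (\<i> *s b)"
    have lv: "v'' x b b + v'' x (\<i> *s b) (\<i> *s b) = 0" using Lv[OF xD, of b] by (simp add: levi_def)
    have l4: "4 * levi (U2 x) b = U2 x b b + U2 x (\<i> *s b) (\<i> *s b)" by (simp add: levi_def)
    have eq: "4 * levi (U2 x) b = F x * (theta2 (d x) * (B1^2 + B2^2) + theta1 (d x) * (4 * levi (d'' x) b)
        + 2 * theta1 (d x) * (A1 * B1 + A2 * B2) + theta (d x) * (A1^2 + A2^2))"
    proof -
      have lv': "v'' x b b = - v'' x (\<i> *s b) (\<i> *s b)" using lv by linarith
      have e4: "4 * levi (d'' x) b = d'' x b b + d'' x (\<i> *s b) (\<i> *s b)" by (simp add: levi_def)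
      show ?thesis
        unfolding l4 e4 using lv' unfolding U2_def F2_def T2_def F1_def T1_def A1_def A2_def B1_def B2_def T_def
        by (simp add: blinfun.add_left blinfun.scaleR_left algebra_simps power2_eq_square)
    qed
    show ?thesis
    proof (cases "d x \<le> 0")
      case True
      then have "4 * levi (U2 x) b = 0" unfolding eq by (simp add: theta_def theta1_def theta2_def)
      then show ?thesis by simp
    next
      case False
      define s where "s = d x"
      have s: "0 < s" "s \<le> 1/4" using False dx by (auto simp: s_def eps_def)
      have "s * al \<le> sqrt lam" using dx al by (simp add: s_def eps_def field_simps)
      then have "(s * al)^2 \<le> (sqrt lam)^2" using s al by (intro power_mono) auto
      then have sa: "s^2 * al^2 \<le> lam" using lam by (simp add: power_mult_distrib)
      have nA1: "\<bar>A1\<bar> \<le> al * norm b" unfolding A1_def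
        using norm_blinfun[of "v' x" b] al(2)[OF xE] by (metis real_norm_def mult_right_mono norm_ge_zero order_trans)
      have nA2: "\<bar>A2\<bar> \<le> al * norm b" unfolding A2_def
        using norm_blinfun[of "v' x" "\<i> *s b"] al(2)[OF xE] norm_i_smult[of b]
        by (metis real_norm_def mult_right_mono norm_ge_zero order_trans)
      have "A1^2 \<le> (al * norm b)^2" using nA1 by (metis abs_le_square_iff abs_of_nonneg al(1) mult_nonneg_nonneg norm_ge_zero less_imp_le)
      moreover have "A2^2 \<le> (al * norm b)^2" using nA2 by (metis abs_le_square_iff abs_of_nonneg al(1) mult_nonneg_nonneg norm_ge_zero less_imp_le)
      ultimately have A: "A1^2 + A2^2 \<le> 2 * al^2 * (norm b)^2" by (simp add: power_mult_distrib)
      have ineq: "0 \<le> (1/s^4 - 2/s^3)*(B1^2+B2^2) + 4*levi (d'' x) b/s^2 + 2*(A1*B1 + A2*B2)/s^2 + (A1^2+A2^2)"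
        by (rule key_ineq[OF s sa A _ zero_le_power2]) (use Lb[OF xE, of b] in \<open>simp add: mult.commute\<close>)
      have "4 * levi (U2 x) b = F x * exp (- 1 / s) * ((1/s^4 - 2/s^3)*(B1^2+B2^2) + 4*levi (d'' x) b/s^2 + 2*(A1*B1 + A2*B2)/s^2 + (A1^2+A2^2))"
        unfolding eq using s by (simp add: s_def[symmetric] theta_def theta1_def theta2_def field_simps eval_nat_numeral)
      also have "\<dots> \<ge> 0" using ineq by (simp add: F_def)
      finally show ?thesis by simp
    qed
  qed
  have usc: "usc_on S (\<lambda>z. exp (v z) * theta (d z))"
    unfolding usc_on_def
  proof (intro ballI allI impI)
    fix x c assume x: "x \<in> S" and lt: "exp (v x) * theta (d x) < c"
    have "continuous (at x within S) (\<lambda>z. exp (v z) * theta (d z))"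
      using du[of x] x SD by (auto intro: has_derivative_continuous continuous_at_imp_continuous_at_within)
    then have "((\<lambda>z. exp (v z) * theta (d z)) \<longlongrightarrow> exp (v x) * theta (d x)) (at x within S)"
      by (simp add: continuous_within)
    then show "\<forall>\<^sub>F y in at x within S. exp (v y) * theta (d y) < c"
      using lt by (rule order_tendstoD(2))
  qed
  have "psh S (\<lambda>z. exp (v z) * theta (d z))"
    unfolding psh_def using usc submean[OF oS C2S LU] by blast
  then show ?thesis using eps unfolding S_def by blast
qed

end
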